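(* Let $(X,d_X,\mu,T)$ and $(Y,d_Y,\nu,S)$ be compact metric measure-preserving systems, with anchor sequences $(a_r)_{r\ge1}$ dense in $\operatorname{supp}\mu$ and $(b_r)_{r\ge1}$ dense in $\operatorname{supp}\nu$. Then the following are equivalent: (1) the systems are disjoint, i.e. $\mathcal J(T,S)=\{\mu\otimes\nu\}$; (2) for every $n,m,R\ge1$, $\widetilde\Phi_{n,m,R}(\mathcal J(T,S))=\{\widetilde\Phi_{n,m,R}(\mu\otimes\nu)\}$.
   Context: A compact metric measure-preserving system $(X,d_X,\mu,T)$: $(X,d_X)$ compact metric, $\mu$ Borel probability, $T$ Borel with $T_\#\mu=\mu$. $\mathcal J(T,S)$: Borel probability measures on $X\times Y$ with marginals $\mu,\nu$ invariant under $T\times S$ (joinings). For $z_i=(x_i,y_i)$, $\mathcal D^X_{n,m}=(d_X(T^ax_i,T^bx_j))_{1\le i,j\le n,0\le a,b<m}$; the anchored array is $\widetilde{\mathcal D}^X_{n,m,R}=\bigl(\mathcal D^X_{n,m},(d_X(T^ax_i,a_r))_{1\le i\le n,0\le a<m,1\le r\le R}\bigr)$, and $\widetilde{\mathcal D}^Y_{n,m,R}$ analogously with $d_Y,S,b_r$. $\widetilde\Phi_{n,m,R}(\lambda)=\mathrm{Law}_{\lambda^{\otimes n}}(\widetilde{\mathcal D}^X_{n,m,R},\widetilde{\mathcal D}^Y_{n,m,R})$. *)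

theory Defs
  imports "HOL-Probability.Probability"
begin

definition cmmps :: "'a::metric_space measure \<Rightarrow> ('a \<Rightarrow> 'a) \<Rightarrow> bool" where
  "cmmps M T \<longleftrightarrow> compact (UNIV :: 'a set) \<and> prob_space M \<and> sets M = sets borel
     \<and> T \<in> borel_measurable borel \<and> distr M borel T = M"

definition supp :: "'a::metric_space measure \<Rightarrow> 'a set" where
  "supp M = {x. \<forall>e>0. emeasure M (ball x e) > 0}"

definition dense_in_supp :: "(nat \<Rightarrow> 'a::metric_space) \<Rightarrow> 'a measure \<Rightarrow> bool" where
  "dense_in_supp a M \<longleftrightarrow> a ` {1..} \<subseteq> supp M \<and> supp M \<subseteq> closure (a ` {1..})"

definition joinings ::
  "'a::metric_space measure \<Rightarrow> ('a \<Rightarrow> 'a) \<Rightarrow> 'b::metric_space measure \<Rightarrow> ('b \<Rightarrow> 'b)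
     \<Rightarrow> ('a \<times> 'b) measure set" where
  "joinings M T N S = {L. prob_space L \<and> sets L = sets (borel \<Otimes>\<^sub>M borel)
      \<and> distr L borel fst = M \<and> distr L borel snd = N
      \<and> distr L (borel \<Otimes>\<^sub>M borel) (\<lambda>(x, y). (T x, S y)) = L}"

text \<open>Index set of the anchored array: Inl (i,j,a,b) for the distance block,
Inr (i,a,r) for the anchor block, with 1 \<le> i,j \<le> n, 0 \<le> a,b < m, 1 \<le> r \<le> R.\<close>
definition arr_idx :: "nat \<Rightarrow> nat \<Rightarrow> nat \<Rightarrow> ((nat \<times> nat \<times> nat \<times> nat) + (nat \<times> nat \<times> nat)) set" where
  "arr_idx n m R = Inl ` ({1..n} \<times> {1..n} \<times> {..<m} \<times> {..<m}) \<union> Inr ` ({1..n} \<times> {..<m} \<times> {1..R})"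

definition anch_array ::
  "nat \<Rightarrow> nat \<Rightarrow> nat \<Rightarrow> ('a::metric_space \<Rightarrow> 'a) \<Rightarrow> (nat \<Rightarrow> 'a) \<Rightarrow> (nat \<Rightarrow> 'a)
     \<Rightarrow> ((nat \<times> nat \<times> nat \<times> nat) + (nat \<times> nat \<times> nat)) \<Rightarrow> real" where
  "anch_array n m R T a p = restrict (\<lambda>k. case k of
       Inl (i, j, s, t) \<Rightarrow> dist ((T ^^ s) (p i)) ((T ^^ t) (p j))
     | Inr (i, s, r) \<Rightarrow> dist ((T ^^ s) (p i)) (a r)) (arr_idx n m R)"

definition arr_space :: "nat \<Rightarrow> nat \<Rightarrow> nat \<Rightarrow> (((nat \<times> nat \<times> nat \<times> nat) + (nat \<times> nat \<times> nat)) \<Rightarrow> real) measure" where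
  "arr_space n m R = PiM (arr_idx n m R) (\<lambda>_. borel)"

definition Phi ::
  "nat \<Rightarrow> nat \<Rightarrow> nat \<Rightarrow> ('a::metric_space \<Rightarrow> 'a) \<Rightarrow> (nat \<Rightarrow> 'a)
     \<Rightarrow> ('b::metric_space \<Rightarrow> 'b) \<Rightarrow> (nat \<Rightarrow> 'b) \<Rightarrow> ('a \<times> 'b) measure
     \<Rightarrow> ((((nat \<times> nat \<times> nat \<times> nat) + (nat \<times> nat \<times> nat)) \<Rightarrow> real)
         \<times> (((nat \<times> nat \<times> nat \<times> nat) + (nat \<times> nat \<times> nat)) \<Rightarrow> real)) measure" where
  "Phi n m R T a S b L = distr (PiM {1..n} (\<lambda>_. L)) (arr_space n m R \<Otimes>\<^sub>M arr_space n m R)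
     (\<lambda>z. (anch_array n m R T a (\<lambda>i. fst (z i)), anch_array n m R S b (\<lambda>i. snd (z i))))"

end

theory Submission imports Defs begin

lemma compl_supp_eq: "- supp M = {x. \<exists>e>0. emeasure M (ball x e) = 0}"
  by (auto simp: supp_def not_less)

lemma open_compl_supp:
  assumes "sets M = sets (borel::'a::metric_space measure)"
  shows "open (- supp M)"
proof (unfold open_dist, intro ballI)
  fix x assume "x \<in> - supp M"
  then obtain e where e: "e > 0" "emeasure M (ball x e) = 0" by (auto simp: compl_supp_eq)
  show "\<exists>e>0. \<forall>y. dist y x < e \<longrightarrow> y \<in> - supp M"
  proof (intro exI[of _ e] conjI allI impI e(1))
    fix y assume y: "dist y x < e"
    have "ball y (e - dist y x) \<subseteq> ball x e"
    proof
      fix z assume "z \<in> ball y (e - dist y x)"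
      moreover have "dist x z \<le> dist x y + dist y z" by (rule dist_triangle)
      ultimately show "z \<in> ball x e" by (simp add: dist_commute)
    qed
    then have "emeasure M (ball y (e - dist y x)) \<le> emeasure M (ball x e)"
      by (intro emeasure_mono) (auto simp: assms)
    with e y show "y \<in> - supp M" by (auto simp: compl_supp_eq intro!: exI[of _ "e - dist y x"])
  qed
qed

lemma supp_null:
  assumes cpt: "compact (UNIV::'a::metric_space set)" and sM: "sets M = sets (borel::'a measure)"
  shows "emeasure M (- supp M) = 0"
proof -
  have "\<forall>n::nat. \<exists>D. finite D \<and> (UNIV::'a set) \<subseteq> (\<Union>c\<in>D. ball c (1 / Suc n))"
  proof
    fix n :: nat
    obtain D where "D \<subseteq> UNIV" "finite D" "(UNIV::'a set) \<subseteq> (\<Union>c\<in>D. ball c (1 / Suc n))"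
      by (rule compactE_image[OF cpt, of UNIV "\<lambda>c. ball c (1 / Suc n)"]) auto
    then show "\<exists>D. finite D \<and> (UNIV::'a set) \<subseteq> (\<Union>c\<in>D. ball c (1 / Suc n))" by blast
  qed
  then obtain D where D: "\<And>n. finite (D n)" "\<And>n. (UNIV::'a set) \<subseteq> (\<Union>c\<in>D n. ball c (1 / Suc n))"
    by metis
  define I where "I = {(n, c). c \<in> D n \<and> emeasure M (ball c (1 / Suc n)) = 0}"
  have cI: "countable I"
  proof (rule countable_subset)
    show "I \<subseteq> Sigma UNIV D" by (auto simp: I_def)
    show "countable (Sigma UNIV D)" using D(1) by (intro countable_SIGMA) (auto intro: countable_finite)
  qed
  have nul: "(\<Union>i\<in>I. ball (snd i) (1 / Suc (fst i))) \<in> null_sets M"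
    by (rule null_sets_UN'[OF cI]) (auto simp: I_def sM null_sets_def)
  have sub: "- supp M \<subseteq> (\<Union>i\<in>I. ball (snd i) (1 / Suc (fst i)))"
  proof
    fix x assume "x \<in> - supp M"
    then obtain e where e: "e > 0" "emeasure M (ball x e) = 0" by (auto simp: compl_supp_eq)
    obtain n :: nat where n: "1 / Suc n < e / 2"
      using e(1) by (metis half_gt_zero_iff nat_approx_posE of_nat_Suc)
    obtain c where c: "c \<in> D n" "x \<in> ball c (1 / Suc n)" using D(2)[of n] by blast
    have "ball c (1 / Suc n) \<subseteq> ball x e"
    proof
      fix z assume "z \<in> ball c (1 / Suc n)"
      then have "dist x z \<le> dist x c + dist c z" "dist c z < 1 / Suc n" "dist c x < 1 / Suc n"
        using c by (auto simp: dist_triangle)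
      then show "z \<in> ball x e" using n by (simp add: dist_commute)
    qed
    then have "emeasure M (ball c (1 / Suc n)) \<le> emeasure M (ball x e)"
      by (intro emeasure_mono) (auto simp: sM)
    with e have "(n, c) \<in> I" using c by (auto simp: I_def)
    with c show "x \<in> (\<Union>i\<in>I. ball (snd i) (1 / Suc (fst i)))" by force
  qed
  have "- supp M \<in> sets M" using open_compl_supp[OF sM] by (simp add: sM)
  from null_sets_subset[OF nul this sub] show ?thesis by auto
qed


definition Pset :: "(nat \<Rightarrow> 'a::metric_space) \<Rightarrow> 'a set set" where
  "Pset a = {{x. \<forall>r\<in>F. dist x (a r) < q r} | F q. finite F \<and> F \<subseteq> {1..}}"

lemma Pset_I: assumes "finite F" "F \<subseteq> {1..}" shows "{x. \<forall>r\<in>F. dist x (a r) < q r} \<in> Pset a"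
  unfolding Pset_def
  apply (rule CollectI)
  apply (rule exI[of _ F])
  apply (rule exI[of _ q])
  using assms by simp

lemma Pset_E: assumes "e \<in> Pset a" obtains F q where "e = {x. \<forall>r\<in>F. dist x (a r) < q r}" "finite F" "F \<subseteq> {1..}"
  using assms unfolding Pset_def mem_Collect_eq by blast

lemma ball_in_Pset: "r \<ge> 1 \<Longrightarrow> ball (a r) e \<in> sigma_sets UNIV (Pset a)"
proof -
  assume r: "r \<ge> 1"
  have "ball (a r) e = {x. \<forall>r'\<in>{r}. dist x (a r') < (\<lambda>_. e) r'}"
    by (auto simp: dist_commute)
  also have "\<dots> \<in> Pset a" using r by (intro Pset_I) auto
  finally show ?thesis by (rule sigma_sets.Basic)
qed

lemma approx_open:
  assumes d: "dense_in_supp a M" and U: "open U"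
  shows "\<exists>E\<in>sigma_sets UNIV (Pset a). U \<inter> supp M = E \<inter> supp M"
proof -
  define B where "B = (\<lambda>(r,q). ball (a r) (real_of_rat q)) ` {(r,q). r \<ge> 1 \<and> ball (a r) (real_of_rat q) \<subseteq> U}"
  have "countable B" unfolding B_def
    by (intro countable_image countable_subset[OF _ countableI_type[where 'a="nat \<times> rat"]]) auto
  then have E: "\<Union>B \<in> sigma_sets UNIV (Pset a)"
    by (rule sigma_sets_UNION) (auto simp: B_def intro: ball_in_Pset)
  have "U \<inter> supp M = \<Union>B \<inter> supp M"
  proof
    show "\<Union>B \<inter> supp M \<subseteq> U \<inter> supp M" by (auto simp: B_def)
    show "U \<inter> supp M \<subseteq> \<Union>B \<inter> supp M"
    proof
      fix x assume x: "x \<in> U \<inter> supp M"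
      then obtain e where e: "e > 0" "ball x e \<subseteq> U" using U by (meson IntD1 openE)
      have "x \<in> closure (a ` {1..})" using x d by (auto simp: dense_in_supp_def)
      then have "\<exists>y\<in>a ` {1..}. dist y x < e / 3"
        using e(1) closure_approachable by (metis divide_pos_pos zero_less_numeral)
      then obtain r where r: "r \<ge> 1" "dist (a r) x < e / 3" by auto
      obtain q where q: "e / 3 < real_of_rat q" "real_of_rat q < 2 * e / 3"
        using of_rat_dense[of "e / 3" "2 * e / 3"] e(1) by auto
      have sub: "ball (a r) (real_of_rat q) \<subseteq> U"
      proof
        fix z assume "z \<in> ball (a r) (real_of_rat q)"
        moreover have "dist x z \<le> dist x (a r) + dist (a r) z" by (rule dist_triangle)
        ultimately have "z \<in> ball x e" using r q by (simp add: dist_commute)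
        then show "z \<in> U" using e by auto
      qed
      have "x \<in> ball (a r) (real_of_rat q)" using r q by simp
      moreover have "ball (a r) (real_of_rat q) \<in> B"
        unfolding B_def by (rule image_eqI[where x="(r,q)"]) (use sub r in auto)
      ultimately show "x \<in> \<Union>B \<inter> supp M" using x by blast
    qed
  qed
  with E show ?thesis by blast
qed

lemma approx_borel:
  assumes d: "dense_in_supp a M" and A: "A \<in> sets borel"
  shows "\<exists>E\<in>sigma_sets UNIV (Pset a). A \<inter> supp M = E \<inter> supp M"
proof -
  from A have "A \<in> sigma_sets UNIV {S. open S}" by (simp add: sets_borel)
  then show ?thesis
  proof induct
    case (Basic U) then have "open U" by simp
    then show ?case by (rule approx_open[OF d])
  next
    case Empty then show ?case by (intro bexI[of _ "{}"]) (auto intro: sigma_sets.Empty)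
  next
    case (Compl A)
    then obtain E where "E \<in> sigma_sets UNIV (Pset a)" "A \<inter> supp M = E \<inter> supp M" by blast
    then have "(UNIV - A) \<inter> supp M = (UNIV - E) \<inter> supp M" "UNIV - E \<in> sigma_sets UNIV (Pset a)"
      by (blast, blast intro: sigma_sets.Compl)
    then show ?case by blast
  next
    case (Union A)
    then obtain E where "\<And>i. E i \<in> sigma_sets UNIV (Pset a) \<and> A i \<inter> supp M = E i \<inter> supp M"
      by metis
    then have "(\<Union>i. A i) \<inter> supp M = (\<Union>i. E i) \<inter> supp M" "(\<Union>i. E i) \<in> sigma_sets UNIV (Pset a)"
      by (blast, blast intro: sigma_sets.Union)
    then show ?case by blast
  qed
qed


definition AX :: "(nat \<Rightarrow> 'a::metric_space) \<Rightarrow> nat \<Rightarrow> 'a \<Rightarrow> ((nat \<times> nat \<times> nat \<times> nat) + (nat \<times> nat \<times> nat)) \<Rightarrow> real" where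
  "AX a R x = (\<lambda>k\<in>arr_idx 1 1 R. case k of Inl _ \<Rightarrow> 0 | Inr (i, s, r) \<Rightarrow> dist x (a r))"

lemma anch_simp: "anch_array 1 1 R T a p = AX a R (p 1)"
  unfolding anch_array_def AX_def
  by (intro restrict_ext) (auto simp: arr_idx_def)

lemma AX_meas: "AX a R \<in> borel \<rightarrow>\<^sub>M arr_space 1 1 R"
  unfolding AX_def arr_space_def
proof (rule measurable_restrict)
  fix k assume "k \<in> arr_idx 1 1 R"
  show "(\<lambda>x. case k of Inl _ \<Rightarrow> 0 | Inr (i, s, r) \<Rightarrow> dist x (a r)) \<in> borel_measurable borel"
    by (cases k) (auto intro!: borel_measurable_continuous_onI continuous_intros)
qed

lemma Phi_simp:
  assumes L: "prob_space L" "sets L = sets (borel \<Otimes>\<^sub>M borel)"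
  shows "Phi 1 1 R T a S b L = distr L (arr_space 1 1 R \<Otimes>\<^sub>M arr_space 1 1 R) (\<lambda>w. (AX a R (fst w), AX b R (snd w)))"
proof -
  have mG: "(\<lambda>w. (AX a R (fst w), AX b R (snd w))) \<in> L \<rightarrow>\<^sub>M arr_space 1 1 R \<Otimes>\<^sub>M arr_space 1 1 R"
    unfolding measurable_cong_sets[OF L(2) refl]
    by (intro measurable_Pair measurable_compose[OF measurable_fst AX_meas] measurable_compose[OF measurable_snd AX_meas])
  have "Phi 1 1 R T a S b L = distr (PiM {1::nat} (\<lambda>_. L)) (arr_space 1 1 R \<Otimes>\<^sub>M arr_space 1 1 R)
      ((\<lambda>w. (AX a R (fst w), AX b R (snd w))) \<circ> (\<lambda>z. z 1))"
    unfolding Phi_def anch_simp o_def atLeastAtMost_singleton by (rule refl)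
  also have "\<dots> = distr (distr (PiM {1::nat} (\<lambda>_. L)) L (\<lambda>z. z 1)) (arr_space 1 1 R \<Otimes>\<^sub>M arr_space 1 1 R)
      (\<lambda>w. (AX a R (fst w), AX b R (snd w)))"
    by (rule distr_distr[symmetric, OF mG]) (rule measurable_component_singleton, simp)
  also have "distr (PiM {1::nat} (\<lambda>_. L)) L (\<lambda>z. z 1) = L"
    using distr_PiM_component[of "{1::nat}" "\<lambda>_. L" 1] L(1) by simp
  finally show ?thesis .
qed


definition Pprod :: "(nat \<Rightarrow> 'a::metric_space) \<Rightarrow> (nat \<Rightarrow> 'b::metric_space) \<Rightarrow> ('a \<times> 'b) set set" where
  "Pprod a b = {e1 \<times> e2 | e1 e2. e1 \<in> Pset a \<and> e2 \<in> Pset b}"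

lemma Pprod_I: assumes "e1 \<in> Pset a" "e2 \<in> Pset b" shows "e1 \<times> e2 \<in> Pprod a b"
  unfolding Pprod_def
  apply (rule CollectI)
  apply (rule exI[of _ e1])
  apply (rule exI[of _ e2])
  using assms by simp

lemma Pprod_E: assumes "e \<in> Pprod a b" obtains e1 e2 where "e = e1 \<times> e2" "e1 \<in> Pset a" "e2 \<in> Pset b"
  using assms unfolding Pprod_def mem_Collect_eq by blast

lemma UNIV_Pset: "UNIV \<in> Pset a"
proof -
  have "UNIV = {x. \<forall>r\<in>{}. dist x (a r) < (\<lambda>_. 0) r}" by simp
  also have "\<dots> \<in> Pset a" by (rule Pset_I) auto
  finally show ?thesis .
qed

lemma Pset_open: "e \<in> Pset a \<Longrightarrow> open e"
proof -
  assume "e \<in> Pset a"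
  then obtain F q where e: "e = {x. \<forall>r\<in>F. dist x (a r) < q r}" "finite F" by (rule Pset_E)
  have "e = (\<Inter>r\<in>F. ball (a r) (q r))" by (auto simp: e dist_commute)
  then show "open e" using e(2) by auto
qed

lemma Int_stable_Pset: "Int_stable (Pset a)"
proof (rule Int_stableI)
  fix e1 e2 assume e1: "e1 \<in> Pset a" and e2: "e2 \<in> Pset a"
  obtain F q where "e1 = {x. \<forall>r\<in>F. dist x (a r) < q r}" "finite F" "F \<subseteq> {1..}"
    using e1 by (rule Pset_E)
  moreover obtain F' q' where "e2 = {x. \<forall>r\<in>F'. dist x (a r) < q' r}" "finite F'" "F' \<subseteq> {1..}"
    using e2 by (rule Pset_E)
  ultimately have e: "e1 = {x. \<forall>r\<in>F. dist x (a r) < q r}" "finite F" "F \<subseteq> {1..}"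
    "e2 = {x. \<forall>r\<in>F'. dist x (a r) < q' r}" "finite F'" "F' \<subseteq> {1..}" by blast+
  define q'' where "q'' r = (if r \<in> F then (if r \<in> F' then min (q r) (q' r) else q r) else q' r)" for r
  have "e1 \<inter> e2 = {x. \<forall>r\<in>F \<union> F'. dist x (a r) < q'' r}"
  proof (intro set_eqI iffI)
    fix x assume x: "x \<in> e1 \<inter> e2"
    show "x \<in> {x. \<forall>r\<in>F \<union> F'. dist x (a r) < q'' r}"
    proof (intro CollectI ballI)
      fix r assume "r \<in> F \<union> F'"
      then show "dist x (a r) < q'' r" using x unfolding e q''_def by (cases "r \<in> F"; cases "r \<in> F'") auto
    qed
  next
    fix x assume x: "x \<in> {x. \<forall>r\<in>F \<union> F'. dist x (a r) < q'' r}"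
    have "dist x (a r) < q r" if "r \<in> F" for r
      using x that bspec[OF CollectD[OF x], of r] unfolding q''_def by (cases "r \<in> F'") auto
    moreover have "dist x (a r) < q' r" if "r \<in> F'" for r
      using x that bspec[OF CollectD[OF x], of r] unfolding q''_def by (cases "r \<in> F") auto
    ultimately show "x \<in> e1 \<inter> e2" unfolding e by blast
  qed
  also have "\<dots> \<in> Pset a" using e by (intro Pset_I) auto
  finally show "e1 \<inter> e2 \<in> Pset a" .
qed

lemma Int_stable_Pprod: "Int_stable (Pprod a b)"
proof (rule Int_stableI)
  fix A B assume A: "A \<in> Pprod a b" and B: "B \<in> Pprod a b"
  obtain e1 e2 where "A = e1 \<times> e2" "e1 \<in> Pset a" "e2 \<in> Pset b" using A by (rule Pprod_E)
  moreover obtain f1 f2 where "B = f1 \<times> f2" "f1 \<in> Pset a" "f2 \<in> Pset b" using B by (rule Pprod_E)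
  moreover have "e1 \<inter> f1 \<in> Pset a" "e2 \<inter> f2 \<in> Pset b"
    using calculation Int_stable_Pset[of a] Int_stable_Pset[of b] unfolding Int_stable_def by blast+
  ultimately show "A \<inter> B \<in> Pprod a b" by (simp add: Times_Int_Times Pprod_I)
qed

lemma times_UNIV_sigma:
  assumes "E \<in> sigma_sets UNIV (Pset a)"
  shows "E \<times> (UNIV::'b set) \<in> sigma_sets UNIV (Pprod a (b::nat \<Rightarrow> 'b::metric_space))"
  using assms
proof induct
  case (Basic e) then show ?case using UNIV_Pset[of b] by (intro sigma_sets.Basic Pprod_I)
next
  case Empty then show ?case by (simp add: sigma_sets.Empty)
next
  case (Compl E)
  have "(UNIV - E) \<times> (UNIV::'b set) = UNIV - E \<times> UNIV" by auto
  with Compl show ?case by (auto intro: sigma_sets.Compl)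
next
  case (Union E)
  have "(\<Union>i. E i) \<times> (UNIV::'b set) = (\<Union>i. E i \<times> UNIV)" by auto
  with Union show ?case by (auto intro: sigma_sets.Union)
qed

lemma UNIV_times_sigma:
  assumes "E \<in> sigma_sets UNIV (Pset b)"
  shows "(UNIV::'a set) \<times> E \<in> sigma_sets UNIV (Pprod (a::nat \<Rightarrow> 'a::metric_space) b)"
  using assms
proof induct
  case (Basic e) then show ?case using UNIV_Pset[of a] by (intro sigma_sets.Basic Pprod_I)
next
  case Empty then show ?case by (simp add: sigma_sets.Empty)
next
  case (Compl E)
  have "(UNIV::'a set) \<times> (UNIV - E) = UNIV - UNIV \<times> E" by auto
  with Compl show ?case by (auto intro: sigma_sets.Compl)
next
  case (Union E)
  have "(UNIV::'a set) \<times> (\<Union>i. E i) = (\<Union>i. UNIV \<times> E i)" by auto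
  with Union show ?case by (auto intro: sigma_sets.Union)
qed

lemma times_sigma:
  assumes "E1 \<in> sigma_sets UNIV (Pset a)" "E2 \<in> sigma_sets UNIV (Pset b)"
  shows "E1 \<times> E2 \<in> sigma_sets UNIV (Pprod a b)"
proof -
  interpret S: sigma_algebra UNIV "sigma_sets UNIV (Pprod a b)"
    by (rule sigma_algebra_sigma_sets) auto
  have "E1 \<times> E2 = (E1 \<times> UNIV) \<inter> (UNIV \<times> E2)" by auto
  then show ?thesis
    using times_UNIV_sigma[OF assms(1)] UNIV_times_sigma[OF assms(2)] S.Int by metis
qed


lemma space_arr: "space (arr_space n m R) = PiE (arr_idx n m R) (\<lambda>_. UNIV)"
  by (simp add: arr_space_def space_PiM)

lemma AX_Inr: "1 \<le> r \<Longrightarrow> r \<le> R \<Longrightarrow> AX a R x (Inr (1, 0, r)) = dist x (a r)"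
  by (simp add: AX_def arr_idx_def)

lemma rect_eq:
  assumes L: "prob_space L" "sets L = sets (borel \<Otimes>\<^sub>M borel)"
    and L': "prob_space L'" "sets L' = sets (borel \<Otimes>\<^sub>M borel)"
    and Ph: "\<And>R. R \<ge> 1 \<Longrightarrow> Phi 1 1 R T a S b L = Phi 1 1 R T a S b L'"
    and E: "E \<in> Pprod a b"
  shows "emeasure L E = emeasure L' E"
proof -
  obtain e1 e2 where E12: "E = e1 \<times> e2" "e1 \<in> Pset a" "e2 \<in> Pset b" using E by (rule Pprod_E)
  obtain F q where e1: "e1 = {x. \<forall>r\<in>F. dist x (a r) < q r}" "finite F" "F \<subseteq> {1..}"
    using E12(2) by (rule Pset_E)
  obtain F' p where e2: "e2 = {y. \<forall>r\<in>F'. dist y (b r) < p r}" "finite F'" "F' \<subseteq> {1..}"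
    using E12(3) by (rule Pset_E)
  define R where "R = Max (insert 1 (F \<union> F'))"
  have R1: "R \<ge> 1" unfolding R_def using e1(2) e2(2) by simp
  have RF: "r \<le> R" if "r \<in> F \<union> F'" for r unfolding R_def using e1(2) e2(2) that by simp
  define Arr where "Arr = arr_space 1 1 R \<Otimes>\<^sub>M arr_space 1 1 R"
  define G where "G = (\<lambda>w. (AX a R (fst w), AX b R (snd w)))"
  define C where "C = {w \<in> space Arr. (\<forall>r\<in>F. fst w (Inr (1, 0, r)) < q r) \<and> (\<forall>r\<in>F'. snd w (Inr (1, 0, r)) < p r)}"
  have idx: "Inr (1, 0, r) \<in> arr_idx 1 1 R" if "r \<in> F \<union> F'" for r
    using RF[OF that] e1(3) e2(3) that by (auto simp: arr_idx_def)
  have m1: "(\<lambda>w. fst w (Inr (1, 0, r))) \<in> borel_measurable Arr" if "r \<in> F \<union> F'" for r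
    unfolding Arr_def arr_space_def
    by (rule measurable_compose[OF measurable_fst measurable_component_singleton]) (use idx[OF that] in simp)
  have m2: "(\<lambda>w. snd w (Inr (1, 0, r))) \<in> borel_measurable Arr" if "r \<in> F \<union> F'" for r
    unfolding Arr_def arr_space_def
    by (rule measurable_compose[OF measurable_snd measurable_component_singleton]) (use idx[OF that] in simp)
  have "Measurable.pred Arr (\<lambda>w. (\<forall>r\<in>F. fst w (Inr (1, 0, r)) < q r) \<and> (\<forall>r\<in>F'. snd w (Inr (1, 0, r)) < p r))"
  proof (intro pred_intros_logic pred_intros_finite e1(2) e2(2))
    fix r assume "r \<in> F" then have "r \<in> F \<union> F'" by simp
    note mm[measurable] = m1[OF this]
    show "Measurable.pred Arr (\<lambda>w. fst w (Inr (1, 0, r)) < q r)" by measurable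
  next
    fix r assume "r \<in> F'" then have "r \<in> F \<union> F'" by simp
    note mm[measurable] = m2[OF this]
    show "Measurable.pred Arr (\<lambda>w. snd w (Inr (1, 0, r)) < p r)" by measurable
  qed
  then have Cs: "C \<in> sets Arr" unfolding C_def by (rule predE)
  have spL: "space L = UNIV" "space L' = UNIV"
    using sets_eq_imp_space_eq[OF L(2)] sets_eq_imp_space_eq[OF L'(2)] by (simp_all add: space_pair_measure)
  have GC: "G -` C = E"
  proof (intro set_eqI)
    fix w :: "'a \<times> 'b"
    obtain x y where w: "w = (x, y)" by (cases w)
    have sp: "G w \<in> space Arr" unfolding G_def Arr_def
      by (simp add: space_pair_measure space_arr AX_def)
    have "G w \<in> C \<longleftrightarrow> (\<forall>r\<in>F. dist x (a r) < q r) \<and> (\<forall>r\<in>F'. dist y (b r) < p r)"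
    proof -
      have ax1: "AX a R x (Inr (1, 0, r)) = dist x (a r)" if "r \<in> F" for r
        by (rule AX_Inr) (use that RF[of r] e1(3) in auto)
      have ax2: "AX b R y (Inr (1, 0, r)) = dist y (b r)" if "r \<in> F'" for r
        by (rule AX_Inr) (use that RF[of r] e2(3) in auto)
      note ax = ax1 ax2
      have "G w \<in> C \<longleftrightarrow> (\<forall>r\<in>F. AX a R x (Inr (1, 0, r)) < q r) \<and> (\<forall>r\<in>F'. AX b R y (Inr (1, 0, r)) < p r)"
        unfolding C_def using sp by (simp add: G_def w)
      also have "\<dots> \<longleftrightarrow> (\<forall>r\<in>F. dist x (a r) < q r) \<and> (\<forall>r\<in>F'. dist y (b r) < p r)"
        using ax by simp
      finally show ?thesis .
    qed
    then show "w \<in> G -` C \<longleftrightarrow> w \<in> E" by (simp add: E12(1) e1(1) e2(1) w)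
  qed
  have mG: "G \<in> borel \<Otimes>\<^sub>M borel \<rightarrow>\<^sub>M Arr"
    unfolding G_def Arr_def
    by (intro measurable_Pair measurable_compose[OF measurable_fst AX_meas] measurable_compose[OF measurable_snd AX_meas])
  have "emeasure (Phi 1 1 R T a S b L) C = emeasure L (G -` C \<inter> space L)"
    unfolding Phi_simp[OF L] G_def[symmetric] Arr_def[symmetric]
    by (rule emeasure_distr[OF _ Cs]) (simp add: measurable_cong_sets[OF L(2) refl] mG)
  moreover have "emeasure (Phi 1 1 R T a S b L') C = emeasure L' (G -` C \<inter> space L')"
    unfolding Phi_simp[OF L'] G_def[symmetric] Arr_def[symmetric]
    by (rule emeasure_distr[OF _ Cs]) (simp add: measurable_cong_sets[OF L'(2) refl] mG)
  ultimately show ?thesis using Ph[OF R1] GC spL by simp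
qed


lemma Pprod_sets: "Pprod a b \<subseteq> sets (borel \<Otimes>\<^sub>M borel)"
proof
  fix E assume "E \<in> Pprod a b"
  then obtain e1 e2 where "E = e1 \<times> e2" "e1 \<in> Pset a" "e2 \<in> Pset b" by (rule Pprod_E)
  then show "E \<in> sets (borel \<Otimes>\<^sub>M borel)" by (auto intro!: pair_measureI dest: Pset_open)
qed

lemma sigma_eq:
  assumes L: "prob_space L" "sets L = sets (borel \<Otimes>\<^sub>M borel)"
    and L': "prob_space L'" "sets L' = sets (borel \<Otimes>\<^sub>M borel)"
    and Ph: "\<And>R. R \<ge> 1 \<Longrightarrow> Phi 1 1 R T a S b L = Phi 1 1 R T a S b L'"
    and E: "E \<in> sigma_sets UNIV (Pprod a b)"
  shows "emeasure L E = emeasure L' E"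
proof -
  have spL: "space L = UNIV" "space L' = UNIV"
    using sets_eq_imp_space_eq[OF L(2)] sets_eq_imp_space_eq[OF L'(2)] by (simp_all add: space_pair_measure)
  have sub: "sigma_sets UNIV (Pprod a b) \<subseteq> sets L" "sigma_sets UNIV (Pprod a b) \<subseteq> sets L'"
    using sets.sigma_sets_subset[of "Pprod a b" L] sets.sigma_sets_subset[of "Pprod a b" L'] Pprod_sets[of a b] L(2) L'(2) spL
    by auto
  interpret PL: prob_space L by (rule L(1))
  interpret PL': prob_space L' by (rule L'(1))
  have cl: "Pprod a b \<subseteq> Pow UNIV" by simp
  from Int_stable_Pprod[of a b] cl E show ?thesis
  proof (induct rule: sigma_sets_induct_disjoint)
    case (basic A) show ?case by (rule rect_eq[where T=T and S=S, OF L L' _ basic]) (rule Ph)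
  next
    case empty then show ?case by simp
  next
    case (compl A)
    have A: "A \<in> sets L" "A \<in> sets L'" using compl(1) sub by auto
    have "emeasure L (UNIV - A) = emeasure L (space L) - emeasure L A"
      using emeasure_compl[of A L] A(1) PL.emeasure_finite[of A] spL by (simp add: infinity_ennreal_def)
    moreover have "emeasure L' (UNIV - A) = emeasure L' (space L') - emeasure L' A"
      using emeasure_compl[of A L'] A(2) PL'.emeasure_finite[of A] spL by (simp add: infinity_ennreal_def)
    ultimately show ?case using compl(2) PL.emeasure_space_1 PL'.emeasure_space_1 by simp
  next
    case (union A)
    have A: "range A \<subseteq> sets L" "range A \<subseteq> sets L'" using union(2) sub by auto
    have "emeasure L (\<Union>i. A i) = (\<Sum>i. emeasure L (A i))"
      using suminf_emeasure[OF A(1) union(1)] by simp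
    moreover have "emeasure L' (\<Union>i. A i) = (\<Sum>i. emeasure L' (A i))"
      using suminf_emeasure[OF A(2) union(1)] by simp
    ultimately show ?case using union(3) by simp
  qed
qed


lemma restrict_null:
  assumes sL: "sets L = sets (borel \<Otimes>\<^sub>M borel)" and oM: "open (- supp M)" and oN: "open (- supp N)"
    and n1: "emeasure L ((- supp M) \<times> UNIV) = 0" and n2: "emeasure L (UNIV \<times> (- supp N)) = 0"
    and X: "X \<in> sets L"
  shows "emeasure L X = emeasure L (X \<inter> (supp M \<times> supp N))"
proof -
  have s1: "(- supp M) \<times> UNIV \<in> sets L" unfolding sL using oM by (intro pair_measureI) auto
  have s2: "UNIV \<times> (- supp N) \<in> sets L" unfolding sL using oN by (intro pair_measureI) auto
  have nul: "((- supp M) \<times> UNIV) \<union> (UNIV \<times> (- supp N)) \<in> null_sets L"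
    using s1 s2 n1 n2 by (intro null_sets.Un) (auto simp: null_sets_def)
  have Z: "supp M \<times> supp N \<in> sets L"
  proof -
    have "supp M \<times> supp N = UNIV - (((- supp M) \<times> UNIV) \<union> (UNIV \<times> (- supp N)))" by auto
    also have "\<dots> \<in> sets L" using s1 s2 sets.compl_sets[of _ L] sets_eq_imp_space_eq[OF sL]
      by (metis sets.Diff sets.Un sets.top space_pair_measure space_borel UNIV_Times_UNIV)
    finally show ?thesis .
  qed
  have "X - (supp M \<times> supp N) \<in> null_sets L"
    by (rule null_sets_subset[OF nul]) (use X Z in auto)
  moreover have "X = (X \<inter> (supp M \<times> supp N)) \<union> (X - (supp M \<times> supp N))" by auto
  ultimately show ?thesis using X Z emeasure_Un_null_set[of "X \<inter> (supp M \<times> supp N)" L "X - (supp M \<times> supp N)"]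
    by (metis sets.Int)
qed

lemma key:
  assumes L: "prob_space L" "sets L = sets (borel \<Otimes>\<^sub>M borel)"
    and L': "prob_space L'" "sets L' = sets (borel \<Otimes>\<^sub>M borel)"
    and Ph: "\<And>R. R \<ge> 1 \<Longrightarrow> Phi 1 1 R T a S b L = Phi 1 1 R T a S b L'"
    and da: "dense_in_supp a M" and db: "dense_in_supp b N"
    and oM: "open (- supp M)" and oN: "open (- supp N)"
    and n1: "emeasure L ((- supp M) \<times> UNIV) = 0" and n2: "emeasure L (UNIV \<times> (- supp N)) = 0"
    and n1': "emeasure L' ((- supp M) \<times> UNIV) = 0" and n2': "emeasure L' (UNIV \<times> (- supp N)) = 0"
  shows "L = L'"
proof (rule measure_eqI_generator_eq[OF Int_stable_pair_measure_generator[of "borel :: 'a::metric_space measure" "borel :: 'b::metric_space measure"], where \<Omega>=UNIV and A="\<lambda>_. UNIV"])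
  show "{a \<times> b |a b. a \<in> sets borel \<and> b \<in> sets borel} \<subseteq> Pow UNIV" by simp
  show "sets L = sigma_sets UNIV {a \<times> b |a b. a \<in> sets borel \<and> b \<in> sets borel}"
    using L(2) by (simp add: sets_pair_measure)
  show "sets L' = sigma_sets UNIV {a \<times> b |a b. a \<in> sets borel \<and> b \<in> sets borel}"
    using L'(2) by (simp add: sets_pair_measure)
  have "(UNIV :: ('a \<times> 'b) set) \<in> {a \<times> b |a b. a \<in> sets borel \<and> b \<in> sets borel}"
    by (rule CollectI, rule exI[of _ UNIV], rule exI[of _ UNIV]) simp
  then show "range (\<lambda>_::nat. UNIV :: ('a \<times> 'b) set) \<subseteq> {a \<times> b |a b. a \<in> sets borel \<and> b \<in> sets borel}" by auto
  show "(\<Union>i::nat. UNIV :: ('a \<times> 'b) set) = UNIV" by simp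
  show "emeasure L UNIV \<noteq> \<infinity>" for i::nat
    using prob_space.emeasure_space_1[OF L(1)] sets_eq_imp_space_eq[OF L(2)] by (simp add: space_pair_measure)
  fix X :: "('a \<times> 'b) set" assume "X \<in> {a \<times> b |a b. a \<in> sets borel \<and> b \<in> sets borel}"
  then obtain A B where X: "X = A \<times> B" "A \<in> sets borel" "B \<in> sets borel" by blast
  obtain E1 where E1: "E1 \<in> sigma_sets UNIV (Pset a)" "A \<inter> supp M = E1 \<inter> supp M"
    using approx_borel[OF da X(2)] by blast
  obtain E2 where E2: "E2 \<in> sigma_sets UNIV (Pset b)" "B \<inter> supp N = E2 \<inter> supp N"
    using approx_borel[OF db X(3)] by blast
  have E: "E1 \<times> E2 \<in> sigma_sets UNIV (Pprod a b)" by (rule times_sigma[OF E1(1) E2(1)])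
  have spL: "space L = UNIV" "space L' = UNIV"
    using sets_eq_imp_space_eq[OF L(2)] sets_eq_imp_space_eq[OF L'(2)] by (simp_all add: space_pair_measure)
  have sub: "sigma_sets UNIV (Pprod a b) \<subseteq> sets L" "sigma_sets UNIV (Pprod a b) \<subseteq> sets L'"
    using sets.sigma_sets_subset[of "Pprod a b" L] sets.sigma_sets_subset[of "Pprod a b" L'] Pprod_sets[of a b] L(2) L'(2) spL
    by auto
  have XL: "X \<in> sets L" "X \<in> sets L'" unfolding L(2) L'(2) X(1) using X by (auto intro: pair_measureI)
  have eqZ: "X \<inter> (supp M \<times> supp N) = (E1 \<times> E2) \<inter> (supp M \<times> supp N)"
    using E1(2) E2(2) unfolding X(1) by blast
  have "emeasure L X = emeasure L (E1 \<times> E2)"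
    using restrict_null[OF L(2) oM oN n1 n2 XL(1)] restrict_null[OF L(2) oM oN n1 n2, of "E1 \<times> E2"] E sub eqZ
    by auto
  also have "\<dots> = emeasure L' (E1 \<times> E2)" by (rule sigma_eq[OF L L' Ph E])
  also have "\<dots> = emeasure L' X"
    using restrict_null[OF L'(2) oM oN n1' n2' XL(2)] restrict_null[OF L'(2) oM oN n1' n2', of "E1 \<times> E2"] E sub eqZ
    by auto
  finally show "emeasure L X = emeasure L' X" .
qed


lemma joining_null:
  assumes J: "L \<in> joinings M T N S" and sM: "sets M = sets (borel::'a::metric_space measure)"
    and sN: "sets N = sets (borel::'b::metric_space measure)"
    and oM: "open (- supp M)" and oN: "open (- supp N)"
    and nM: "emeasure M (- supp M) = 0" and nN: "emeasure N (- supp N) = 0"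
  shows "emeasure L ((- supp M) \<times> UNIV) = 0" "emeasure L (UNIV \<times> (- supp N)) = 0"
proof -
  have L: "sets L = sets (borel \<Otimes>\<^sub>M borel)" "distr L borel fst = M" "distr L borel snd = N"
    using J by (auto simp: joinings_def)
  have spL: "space L = UNIV"
    using sets_eq_imp_space_eq[OF L(1)] by (simp add: space_pair_measure)
  have mf: "fst \<in> L \<rightarrow>\<^sub>M borel" "snd \<in> L \<rightarrow>\<^sub>M borel"
    unfolding measurable_cong_sets[OF L(1) refl] by simp_all
  have "emeasure (distr L borel fst) (- supp M) = emeasure L (fst -` (- supp M) \<inter> space L)"
    by (rule emeasure_distr[OF mf(1)]) (use oM in auto)
  moreover have "fst -` (- supp M) \<inter> space L = (- supp M) \<times> UNIV" using spL by auto
  ultimately show "emeasure L ((- supp M) \<times> UNIV) = 0" using L(2) nM by simp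
  have "emeasure (distr L borel snd) (- supp N) = emeasure L (snd -` (- supp N) \<inter> space L)"
    by (rule emeasure_distr[OF mf(2)]) (use oN in auto)
  moreover have "snd -` (- supp N) \<inter> space L = UNIV \<times> (- supp N)" using spL by auto
  ultimately show "emeasure L (UNIV \<times> (- supp N)) = 0" using L(3) nN by simp
qed

theorem theorem14:
  fixes M :: "'a::metric_space measure" and T :: "'a \<Rightarrow> 'a" and a :: "nat \<Rightarrow> 'a"
    and N :: "'b::metric_space measure" and S :: "'b \<Rightarrow> 'b" and b :: "nat \<Rightarrow> 'b"
  assumes "cmmps M T" and "cmmps N S"
    and "dense_in_supp a M" and "dense_in_supp b N"
  shows "joinings M T N S = {M \<Otimes>\<^sub>M N} \<longleftrightarrow>
    (\<forall>n m R. n \<ge> 1 \<longrightarrow> m \<ge> 1 \<longrightarrow> R \<ge> 1 \<longrightarrow>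
       Phi n m R T a S b ` joinings M T N S = {Phi n m R T a S b (M \<Otimes>\<^sub>M N)})"
proof
  assume "joinings M T N S = {M \<Otimes>\<^sub>M N}"
  then show "\<forall>n m R. n \<ge> 1 \<longrightarrow> m \<ge> 1 \<longrightarrow> R \<ge> 1 \<longrightarrow>
       Phi n m R T a S b ` joinings M T N S = {Phi n m R T a S b (M \<Otimes>\<^sub>M N)}" by simp
next
  assume H: "\<forall>n m R. n \<ge> 1 \<longrightarrow> m \<ge> 1 \<longrightarrow> R \<ge> 1 \<longrightarrow>
       Phi n m R T a S b ` joinings M T N S = {Phi n m R T a S b (M \<Otimes>\<^sub>M N)}"
  have cM: "compact (UNIV::'a set)" "prob_space M" "sets M = sets (borel::'a measure)"
    using assms(1) by (auto simp: cmmps_def)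
  have cN: "compact (UNIV::'b set)" "prob_space N" "sets N = sets (borel::'b measure)"
    using assms(2) by (auto simp: cmmps_def)
  have oM: "open (- supp M)" by (rule open_compl_supp[OF cM(3)])
  have oN: "open (- supp N)" by (rule open_compl_supp[OF cN(3)])
  have nM: "emeasure M (- supp M) = 0" by (rule supp_null[OF cM(1) cM(3)])
  have nN: "emeasure N (- supp N) = 0" by (rule supp_null[OF cN(1) cN(3)])
  interpret PM: prob_space M by (rule cM(2))
  interpret PN: prob_space N by (rule cN(2))
  have P: "prob_space (M \<Otimes>\<^sub>M N)" by (rule prob_space_pair[OF cM(2) cN(2)])
  have sP: "sets (M \<Otimes>\<^sub>M N) = sets (borel \<Otimes>\<^sub>M borel)"
    by (rule sets_pair_measure_cong[OF cM(3) cN(3)])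
  have bM: "- supp M \<in> sets M" using oM cM(3) by auto
  have bN: "- supp N \<in> sets N" using oN cN(3) by auto
  have uM: "UNIV \<in> sets M" "emeasure M UNIV = 1"
    using cM(3) PM.emeasure_space_1 sets_eq_imp_space_eq[OF cM(3)] by auto
  have uN: "UNIV \<in> sets N" "emeasure N UNIV = 1"
    using cN(3) PN.emeasure_space_1 sets_eq_imp_space_eq[OF cN(3)] by auto
  have nP1: "emeasure (M \<Otimes>\<^sub>M N) ((- supp M) \<times> UNIV) = 0"
    using PN.emeasure_pair_measure_Times[OF bM uN(1)] nM by simp
  have nP2: "emeasure (M \<Otimes>\<^sub>M N) (UNIV \<times> (- supp N)) = 0"
    using PN.emeasure_pair_measure_Times[OF uM(1) bN] nN by simp
  have eq: "L = M \<Otimes>\<^sub>M N" if L: "L \<in> joinings M T N S" for L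
  proof -
    have Ls: "prob_space L" "sets L = sets (borel \<Otimes>\<^sub>M borel)" using L by (auto simp: joinings_def)
    note nL = joining_null[OF L cM(3) cN(3) oM oN nM nN]
    show ?thesis
    proof (rule key[OF Ls P sP _ assms(3,4) oM oN nL nP1 nP2])
      fix R :: nat assume "R \<ge> 1"
      then have "Phi 1 1 R T a S b ` joinings M T N S = {Phi 1 1 R T a S b (M \<Otimes>\<^sub>M N)}"
        using H by simp
      then show "Phi 1 1 R T a S b L = Phi 1 1 R T a S b (M \<Otimes>\<^sub>M N)" using L by blast
    qed
  qed
  have "Phi 1 1 1 T a S b ` joinings M T N S = {Phi 1 1 1 T a S b (M \<Otimes>\<^sub>M N)}"
    using H by simp
  then have "joinings M T N S \<noteq> {}" by auto
  with eq show "joinings M T N S = {M \<Otimes>\<^sub>M N}" by blast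
qed

end
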